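(* Let $n$ and $m_1,\dots,m_n$ be positive integers. Define $f(1)=m_1$ and $f(i)=m_i\left(2\sum_{j=1}^{i-1}f(j)+1\right)$ for $2\le i\le n$, let $x_i=f(i)/m_i$ for $i\in[n]$, and let $\phi(m_1,\dots,m_n)=\sum_{i=1}^n f(i)$. For each $\mathbf{a}=(a_1,\dots,a_n)\in\mathcal{A}:=[m_1]\times\cdots\times[m_n]$ let $$\mathcal{D}_{\mathbf{a}}=\left\{\alpha_1a_1x_1+\cdots+\alpha_na_nx_n \bmod v \;:\; \alpha_i\in\{-1,1\},\ i\in[n]\right\}\subseteq\mathbb{Z}_v,$$ and $\mathfrak{D}=\{\mathcal{D}_{\mathbf{a}}:\mathbf{a}\in\mathcal{A}\}$. Then for every odd positive integer $v\ge 2\phi(m_1,\dots,m_n)+1$, the pair $(\mathbb{Z}_v,\mathfrak{D})$ is a $\left(v,2^n,\prod_{i=1}^n m_i\right)$ non-half-sum disjoint packing.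
   Context: $[m]=\{1,\dots,m\}$. Arithmetic is in $\mathbb{Z}_v$, the integers modulo the odd integer $v$; the half-sum of $x,y\in\mathbb{Z}_v$ is $(x+y)\cdot 2^{-1}$. A $(v,g,b)$ non-half-sum disjoint packing is a pair $(\mathbb{Z}_v,\mathfrak{D})$ where $\mathfrak{D}$ is a family of $b$ subsets ("blocks") of $\mathbb{Z}_v$, each of size $g$, such that (i) any two different blocks are disjoint, and (ii) for each block $\mathcal{D}\in\mathfrak{D}$ and any two different elements $x,y\in\mathcal{D}$, the half-sum $(x+y)/2$ does not belong to any block of $\mathfrak{D}$. *)

theory Defs
  imports Main "HOL-Library.FuncSet"
begin

text \<open>Elements of Z_v are represented by their canonical integer representatives in {0..<v}.\<close>

definition Zv :: "int \<Rightarrow> int set" where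
  "Zv v = {0..<v}"

text \<open>Half-sum in Z_v for odd v: (x+y) times the inverse of 2, which is (v+1)/2.\<close>
definition half_sum :: "int \<Rightarrow> int \<Rightarrow> int \<Rightarrow> int" where
  "half_sum v x y = ((x + y) * ((v + 1) div 2)) mod v"

definition nhs_disjoint_packing :: "int \<Rightarrow> nat \<Rightarrow> nat \<Rightarrow> int set set \<Rightarrow> bool" where
  "nhs_disjoint_packing v g b \<D> \<longleftrightarrow>
     finite \<D> \<and> card \<D> = b \<and>
     (\<forall>D\<in>\<D>. D \<subseteq> Zv v \<and> finite D \<and> card D = g) \<and>
     (\<forall>D1\<in>\<D>. \<forall>D2\<in>\<D>. D1 \<noteq> D2 \<longrightarrow> D1 \<inter> D2 = {}) \<and>
     (\<forall>D\<in>\<D>. \<forall>x\<in>D. \<forall>y\<in>D. x \<noteq> y \<longrightarrow> half_sum v x y \<notin> \<Union>\<D>)"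

text \<open>f(i) for i \<ge> 1: f(1) = m 1 and f(i) = m i * (2 * sum_{j=1}^{i-1} f(j) + 1).
  The value at 0 is an irrelevant dummy.\<close>
function fseq :: "(nat \<Rightarrow> nat) \<Rightarrow> nat \<Rightarrow> int" where
  "fseq m 0 = 0"
| "fseq m (Suc i) = int (m (Suc i)) * (2 * (\<Sum>j\<in>{1..i}. fseq m j) + 1)"
  by pat_completeness auto
termination
  by (relation "measure (\<lambda>(m, i). i)") auto

definition xseq :: "(nat \<Rightarrow> nat) \<Rightarrow> nat \<Rightarrow> int" where
  "xseq m i = fseq m i div int (m i)"

definition phi :: "nat \<Rightarrow> (nat \<Rightarrow> nat) \<Rightarrow> int" where
  "phi n m = (\<Sum>i\<in>{1..n}. fseq m i)"

definition block :: "int \<Rightarrow> nat \<Rightarrow> (nat \<Rightarrow> nat) \<Rightarrow> (nat \<Rightarrow> int) \<Rightarrow> int set" where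
  "block v n m a = {(\<Sum>i\<in>{1..n}. \<alpha> i * a i * xseq m i) mod v
                     | \<alpha>. \<alpha> \<in> {1..n} \<rightarrow>\<^sub>E {-1, 1}}"

definition family :: "int \<Rightarrow> nat \<Rightarrow> (nat \<Rightarrow> nat) \<Rightarrow> int set set" where
  "family v n m = block v n m ` (PiE {1..n} (\<lambda>i. {1..int (m i)}))"

end

theory Submission
  imports Defs
begin

definition Sx :: "(nat \<Rightarrow> nat) \<Rightarrow> nat \<Rightarrow> int" where
  "Sx m k = (\<Sum>j\<in>{1..k}. fseq m j)"

lemma fseq_nonneg: "fseq m i \<ge> 0"
proof (induction i rule: less_induct)
  case (less i)
  show ?case
  proof (cases i)
    case 0 then show ?thesis by simp
  next
    case (Suc k)
    have "(\<Sum>j\<in>{1..k}. fseq m j) \<ge> 0"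
      by (rule sum_nonneg) (use less Suc in auto)
    then show ?thesis using Suc by simp
  qed
qed

lemma Sx_nonneg: "Sx m k \<ge> 0"
  unfolding Sx_def by (rule sum_nonneg) (simp add: fseq_nonneg)

lemma xseq_eq:
  assumes "i \<ge> 1" "m i \<ge> 1"
  shows "xseq m i = 2 * Sx m (i - 1) + 1" "fseq m i = int (m i) * xseq m i"
proof -
  obtain k where k: "i = Suc k" using assms(1) by (cases i) auto
  have mp: "int (m i) \<noteq> 0" using assms(2) by simp
  have f: "fseq m i = int (m i) * (2 * Sx m (i - 1) + 1)"
    using k by (simp add: Sx_def)
  show "xseq m i = 2 * Sx m (i - 1) + 1"
    unfolding xseq_def f using mp by simp
  then show "fseq m i = int (m i) * xseq m i" using f by simp
qed

lemma xseq_pos: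
  assumes "i \<ge> 1" "m i \<ge> 1"
  shows "xseq m i \<ge> 1"
  using xseq_eq(1)[of i m] assms Sx_nonneg[of m "i - 1"] by simp

lemma bound_lemma:
  assumes "\<forall>i\<in>{1..k}. m i \<ge> 1" "\<forall>i\<in>{1..k}. \<bar>d i\<bar> \<le> c * int (m i)"
  shows "\<bar>\<Sum>i\<in>{1..k}. d i * xseq m i\<bar> \<le> c * Sx m k"
proof -
  have "\<bar>\<Sum>i\<in>{1..k}. d i * xseq m i\<bar> \<le> (\<Sum>i\<in>{1..k}. \<bar>d i * xseq m i\<bar>)"
    by (rule sum_abs)
  also have "\<dots> \<le> (\<Sum>i\<in>{1..k}. c * fseq m i)"
  proof (rule sum_mono)
    fix i assume i: "i \<in> {1..k}"
    have x: "xseq m i \<ge> 1" using xseq_pos[of i m] i assms(1) by auto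
    have "\<bar>d i * xseq m i\<bar> = \<bar>d i\<bar> * xseq m i" using x by (simp add: abs_mult)
    also have "\<dots> \<le> c * int (m i) * xseq m i"
      using assms(2) i x by (intro mult_right_mono) auto
    also have "\<dots> = c * fseq m i" using xseq_eq(2)[of i m] i assms(1) by auto
    finally show "\<bar>d i * xseq m i\<bar> \<le> c * fseq m i" .
  qed
  also have "\<dots> = c * Sx m k" by (simp add: Sx_def sum_distrib_left)
  finally show ?thesis .
qed

lemma uniq_lemma:
  assumes "\<forall>i\<in>{1..k}. m i \<ge> 1" "\<forall>i\<in>{1..k}. \<bar>d i\<bar> \<le> 2 * int (m i)"
    and "(\<Sum>i\<in>{1..k}. d i * xseq m i) = 0"
  shows "\<forall>i\<in>{1..k}. d i = 0"
  using assms
proof (induction k)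
  case 0 then show ?case by simp
next
  case (Suc k)
  have split: "(\<Sum>i\<in>{1..Suc k}. d i * xseq m i) = (\<Sum>i\<in>{1..k}. d i * xseq m i) + d (Suc k) * xseq m (Suc k)"
    by simp
  have b: "\<bar>\<Sum>i\<in>{1..k}. d i * xseq m i\<bar> \<le> 2 * Sx m k"
    using Suc.prems by (intro bound_lemma) auto
  have xe: "xseq m (Suc k) = 2 * Sx m k + 1" using xseq_eq(1)[of "Suc k" m] Suc.prems(1) by auto
  have dz: "d (Suc k) = 0"
  proof (rule ccontr)
    assume nz: "d (Suc k) \<noteq> 0"
    have "\<bar>d (Suc k) * xseq m (Suc k)\<bar> = \<bar>d (Suc k)\<bar> * xseq m (Suc k)"
      using xe Sx_nonneg[of m k] by (simp add: abs_mult)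
    also have "\<dots> \<ge> 1 * xseq m (Suc k)"
      using nz xe Sx_nonneg[of m k] by (intro mult_right_mono) auto
    finally have "\<bar>d (Suc k) * xseq m (Suc k)\<bar> \<ge> 2 * Sx m k + 1" using xe by simp
    then show False using b Suc.prems(3) split by linarith
  qed
  have "\<forall>i\<in>{1..k}. d i = 0"
    using Suc.IH Suc.prems split dz by auto
  then show ?case using dz by (auto simp: le_Suc_eq)
qed


lemma small_dvd_zero:
  fixes t v :: int
  assumes "v dvd t" "\<bar>t\<bar> < v"
  shows "t = 0"
proof -
  obtain k where k: "t = v * k" using assms(1) by blast
  have "v > 0" using assms(2) by linarith
  show ?thesis
  proof (rule ccontr)
    assume "t \<noteq> 0"
    then have "k \<noteq> 0" using k by simp
    then have "\<bar>k\<bar> \<ge> 1" by linarith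
    then have "\<bar>t\<bar> \<ge> v * 1" using k \<open>v > 0\<close> by (simp add: abs_mult mult_left_mono)
    then show False using assms(2) by simp
  qed
qed

lemma eq_lemma:
  assumes m1: "\<forall>i\<in>{1..n}. m i \<ge> 1"
    and al: "\<alpha> \<in> {1..n} \<rightarrow>\<^sub>E {-1, 1}" and be: "\<beta> \<in> {1..n} \<rightarrow>\<^sub>E {-1, 1}"
    and a: "a \<in> PiE {1..n} (\<lambda>i. {1..int (m i)})" and b: "b \<in> PiE {1..n} (\<lambda>i. {1..int (m i)})"
    and v: "v \<ge> 2 * Sx m n + 1"
    and eq: "(\<Sum>i\<in>{1..n}. \<alpha> i * a i * xseq m i) mod v = (\<Sum>i\<in>{1..n}. \<beta> i * b i * xseq m i) mod v"
  shows "\<forall>i\<in>{1..n}. \<alpha> i = \<beta> i \<and> a i = b i"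
proof -
  let ?d = "\<lambda>i. \<alpha> i * a i - \<beta> i * b i"
  have sd: "(\<Sum>i\<in>{1..n}. ?d i * xseq m i) = (\<Sum>i\<in>{1..n}. \<alpha> i * a i * xseq m i) - (\<Sum>i\<in>{1..n}. \<beta> i * b i * xseq m i)"
    by (simp add: sum_subtractf left_diff_distrib)
  have db: "\<forall>i\<in>{1..n}. \<bar>?d i\<bar> \<le> 2 * int (m i)"
  proof
    fix i assume i: "i \<in> {1..n}"
    have "\<alpha> i \<in> {-1,1}" "\<beta> i \<in> {-1,1}" "a i \<in> {1..int (m i)}" "b i \<in> {1..int (m i)}"
      using al be a b i by auto
    then show "\<bar>?d i\<bar> \<le> 2 * int (m i)" by auto
  qed
  have "\<bar>\<Sum>i\<in>{1..n}. ?d i * xseq m i\<bar> \<le> 2 * Sx m n"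
    using m1 db by (intro bound_lemma) auto
  moreover have "v dvd (\<Sum>i\<in>{1..n}. ?d i * xseq m i)"
    using eq sd by (simp add: mod_eq_dvd_iff)
  ultimately have "(\<Sum>i\<in>{1..n}. ?d i * xseq m i) = 0"
    using v by (intro small_dvd_zero) auto
  then have "\<forall>i\<in>{1..n}. ?d i = 0" using uniq_lemma[OF m1 db] by blast
  then show ?thesis
  proof (intro ballI)
    fix i assume h: "\<forall>i\<in>{1..n}. ?d i = 0" and i: "i \<in> {1..n}"
    have "\<alpha> i \<in> {-1,1}" "\<beta> i \<in> {-1,1}" "a i \<in> {1..int (m i)}" "b i \<in> {1..int (m i)}"
      using al be a b i by auto
    moreover have "\<alpha> i * a i = \<beta> i * b i" using h i by auto
    ultimately show "\<alpha> i = \<beta> i \<and> a i = b i" by auto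
  qed
qed

lemma hs_lemma:
  assumes m1: "\<forall>i\<in>{1..n}. m i \<ge> 1"
    and al: "\<alpha> \<in> {1..n} \<rightarrow>\<^sub>E {-1, 1}" and be: "\<beta> \<in> {1..n} \<rightarrow>\<^sub>E {-1, 1}"
    and ga: "\<gamma> \<in> {1..n} \<rightarrow>\<^sub>E {-1, 1}"
    and a: "a \<in> PiE {1..n} (\<lambda>i. {1..int (m i)})" and b: "b \<in> PiE {1..n} (\<lambda>i. {1..int (m i)})"
    and v: "v \<ge> 2 * Sx m n + 1" and odd: "odd v"
    and eq: "half_sum v ((\<Sum>i\<in>{1..n}. \<alpha> i * a i * xseq m i) mod v) ((\<Sum>i\<in>{1..n}. \<beta> i * a i * xseq m i) mod v)
       = (\<Sum>i\<in>{1..n}. \<gamma> i * b i * xseq m i) mod v"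
  shows "\<forall>i\<in>{1..n}. \<alpha> i = \<beta> i"
proof -
  define X where "X = (\<Sum>i\<in>{1..n}. \<alpha> i * a i * xseq m i)"
  define Y where "Y = (\<Sum>i\<in>{1..n}. \<beta> i * a i * xseq m i)"
  define Z where "Z = (\<Sum>i\<in>{1..n}. \<gamma> i * b i * xseq m i)"
  obtain h where h: "v + 1 = 2 * h" using odd by (metis even_plus_one_iff evenE)
  have hd: "(v + 1) div 2 = h" using h by simp
  have e1: "((X mod v + Y mod v) * h) mod v = Z mod v"
    using eq unfolding half_sum_def X_def Y_def Z_def hd .
  have "((X + Y) * h) mod v = Z mod v"
    using e1 by (metis mod_add_eq mod_mult_left_eq)
  then have "(2 * ((X + Y) * h)) mod v = (2 * Z) mod v"
    by (metis mod_mult_right_eq)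
  moreover have "2 * ((X + Y) * h) = (X + Y) + (X + Y) * v"
  proof -
    have "2 * ((X + Y) * h) = (X + Y) * (2 * h)" by (simp add: algebra_simps)
    also have "\<dots> = (X + Y) * (v + 1)" using h by simp
    finally show ?thesis by (simp add: algebra_simps)
  qed
  ultimately have "(X + Y) mod v = (2 * Z) mod v" by simp
  then have dv: "v dvd (X + Y - 2 * Z)" by (simp add: mod_eq_dvd_iff)
  let ?e = "\<lambda>i. ((\<alpha> i + \<beta> i) div 2) * a i - \<gamma> i * b i"
  have ev: "\<forall>i\<in>{1..n}. \<alpha> i * a i + \<beta> i * a i = 2 * ((\<alpha> i + \<beta> i) div 2 * a i)"
  proof
    fix i assume i: "i \<in> {1..n}"
    have "\<alpha> i \<in> {-1,1}" "\<beta> i \<in> {-1,1}" using al be i by auto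
    then show "\<alpha> i * a i + \<beta> i * a i = 2 * ((\<alpha> i + \<beta> i) div 2 * a i)" by auto
  qed
  have se: "X + Y - 2 * Z = 2 * (\<Sum>i\<in>{1..n}. ?e i * xseq m i)"
  proof -
    have "X + Y - 2 * Z = (\<Sum>i\<in>{1..n}. (\<alpha> i * a i + \<beta> i * a i - 2 * (\<gamma> i * b i)) * xseq m i)"
      unfolding X_def Y_def Z_def
      by (simp add: sum.distrib sum_subtractf sum_distrib_left algebra_simps)
    also have "\<dots> = (\<Sum>i\<in>{1..n}. 2 * (?e i * xseq m i))"
      using ev by (intro sum.cong) (auto simp: algebra_simps)
    finally show ?thesis by (simp add: sum_distrib_left)
  qed
  have eb: "\<forall>i\<in>{1..n}. \<bar>?e i\<bar> \<le> 2 * int (m i)"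
  proof
    fix i assume i: "i \<in> {1..n}"
    have "\<alpha> i \<in> {-1,1}" "\<beta> i \<in> {-1,1}" "\<gamma> i \<in> {-1,1}" "a i \<in> {1..int (m i)}" "b i \<in> {1..int (m i)}"
      using al be ga a b i by auto
    then show "\<bar>?e i\<bar> \<le> 2 * int (m i)" by auto
  qed
  have "\<bar>\<Sum>i\<in>{1..n}. ?e i * xseq m i\<bar> \<le> 2 * Sx m n"
    using m1 eb by (intro bound_lemma) auto
  then have ab: "\<bar>X + Y - 2 * Z\<bar> \<le> 4 * Sx m n" using se by simp
  obtain k where k: "X + Y - 2 * Z = v * k" using dv by blast
  have "even (v * k)" using se k by simp
  then have ek: "even k" using odd by simp
  have "k = 0"
  proof (rule ccontr)
    assume "k \<noteq> 0"
    with ek have "\<bar>k\<bar> \<ge> 2" by (auto elim!: evenE)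
    then have "\<bar>v * k\<bar> \<ge> v * 2" using v Sx_nonneg[of m n] by (simp add: abs_mult mult_left_mono)
    then show False using ab k v by simp
  qed
  then have "(\<Sum>i\<in>{1..n}. ?e i * xseq m i) = 0" using k se by simp
  then have z: "\<forall>i\<in>{1..n}. ?e i = 0" using uniq_lemma[OF m1 eb] by blast
  show ?thesis
  proof
    fix i assume i: "i \<in> {1..n}"
    have "\<alpha> i \<in> {-1,1}" "\<beta> i \<in> {-1,1}" "\<gamma> i \<in> {-1,1}" "b i \<in> {1..int (m i)}"
      using al be ga b i by auto
    moreover have "?e i = 0" using z i by blast
    ultimately show "\<alpha> i = \<beta> i" by auto
  qed
qed


lemma block_img: "block v n m a = (\<lambda>\<alpha>. (\<Sum>i\<in>{1..n}. \<alpha> i * a i * xseq m i) mod v) ` ({1..n} \<rightarrow>\<^sub>E {-1, 1})"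
  unfolding block_def by auto

lemma ext_eq:
  assumes "f \<in> PiE I A" "g \<in> PiE I B" "\<forall>i\<in>I. f i = g i"
  shows "f = g"
  using assms by (metis PiE_E ext)

theorem lemma3:
  fixes n :: nat and m :: "nat \<Rightarrow> nat" and v :: int
  assumes "n \<ge> 1"
    and "\<forall>i\<in>{1..n}. m i \<ge> 1"
    and "odd v" and "v > 0"
    and "v \<ge> 2 * phi n m + 1"
  shows "nhs_disjoint_packing v (2 ^ n) (\<Prod>i\<in>{1..n}. m i) (family v n m)"
proof -
  note m1 = assms(2)
  have v: "v \<ge> 2 * Sx m n + 1" using assms(5) by (simp add: phi_def Sx_def)
  define A where "A = PiE {1..n} (\<lambda>i. {1..int (m i)})"
  define E where "E = ({1..n} \<rightarrow>\<^sub>E {-1, 1::int})"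
  define V where "V = (\<lambda>\<alpha> a. (\<Sum>i\<in>{1..n}. \<alpha> i * a i * xseq m i))"
  have fam: "family v n m = block v n m ` A" unfolding family_def A_def ..
  have blk: "\<And>a. block v n m a = (\<lambda>\<alpha>. V \<alpha> a mod v) ` E"
    unfolding V_def E_def by (rule block_img)
  have eqL: "\<And>\<alpha> \<beta> a b. \<alpha> \<in> E \<Longrightarrow> \<beta> \<in> E \<Longrightarrow> a \<in> A \<Longrightarrow> b \<in> A \<Longrightarrow> V \<alpha> a mod v = V \<beta> b mod v
      \<Longrightarrow> \<alpha> = \<beta> \<and> a = b"
  proof -
    fix \<alpha> \<beta> a b assume h: "\<alpha> \<in> E" "\<beta> \<in> E" "a \<in> A" "b \<in> A" "V \<alpha> a mod v = V \<beta> b mod v"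
    have "\<forall>i\<in>{1..n}. \<alpha> i = \<beta> i \<and> a i = b i"
      using eq_lemma[OF m1 _ _ _ _ v, of \<alpha> \<beta> a b] h unfolding E_def A_def V_def by blast
    then show "\<alpha> = \<beta> \<and> a = b" using h ext_eq unfolding E_def A_def by metis
  qed
  define \<alpha>0 where "\<alpha>0 = restrict (\<lambda>_. 1::int) {1..n}"
  have a0: "\<alpha>0 \<in> E" unfolding \<alpha>0_def E_def by auto
  have finA: "finite A" unfolding A_def by (rule finite_PiE) auto
  have finE: "finite E" unfolding E_def by (rule finite_PiE) auto
  have injb: "inj_on (block v n m) A"
  proof (rule inj_onI)
    fix a b assume a: "a \<in> A" and b: "b \<in> A" and eq: "block v n m a = block v n m b"
    have "V \<alpha>0 a mod v \<in> block v n m b" using eq a0 blk by auto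
    then obtain \<beta> where "\<beta> \<in> E" "V \<alpha>0 a mod v = V \<beta> b mod v" using blk by auto
    then show "a = b" using eqL a0 a b by blast
  qed
  have cardA: "card A = (\<Prod>i\<in>{1..n}. m i)"
    unfolding A_def by (simp add: card_PiE)
  have cardE: "card E = 2 ^ n"
    unfolding E_def by (simp add: card_PiE) (metis numeral_2_eq_2)
  show ?thesis
    unfolding nhs_disjoint_packing_def
  proof (intro conjI)
    show "finite (family v n m)" using fam finA by simp
    show "card (family v n m) = (\<Prod>i\<in>{1..n}. m i)"
      using fam card_image[OF injb] cardA by simp
    show "\<forall>D\<in>family v n m. D \<subseteq> Zv v \<and> finite D \<and> card D = 2 ^ n"
    proof
      fix D assume "D \<in> family v n m"
      then obtain a where a: "a \<in> A" and D: "D = (\<lambda>\<alpha>. V \<alpha> a mod v) ` E" using fam blk by auto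
      have inj: "inj_on (\<lambda>\<alpha>. V \<alpha> a mod v) E"
        by (rule inj_onI) (use eqL a in blast)
      show "D \<subseteq> Zv v \<and> finite D \<and> card D = 2 ^ n"
        using D finE card_image[OF inj] cardE assms(4) by (auto simp: Zv_def)
    qed
    show "\<forall>D1\<in>family v n m. \<forall>D2\<in>family v n m. D1 \<noteq> D2 \<longrightarrow> D1 \<inter> D2 = {}"
    proof (intro ballI impI)
      fix D1 D2 assume "D1 \<in> family v n m" "D2 \<in> family v n m" and ne: "D1 \<noteq> D2"
      then obtain a b where a: "a \<in> A" and b: "b \<in> A" and D1: "D1 = (\<lambda>\<alpha>. V \<alpha> a mod v) ` E"
        and D2: "D2 = (\<lambda>\<alpha>. V \<alpha> b mod v) ` E" using fam blk by auto
      show "D1 \<inter> D2 = {}"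
      proof (rule ccontr)
        assume "D1 \<inter> D2 \<noteq> {}"
        then obtain \<alpha> \<beta> where "\<alpha> \<in> E" "\<beta> \<in> E" "V \<alpha> a mod v = V \<beta> b mod v" using D1 D2 by auto
        then have "a = b" using eqL a b by blast
        then show False using ne D1 D2 by simp
      qed
    qed
    show "\<forall>D\<in>family v n m. \<forall>x\<in>D. \<forall>y\<in>D. x \<noteq> y \<longrightarrow> half_sum v x y \<notin> \<Union> (family v n m)"
    proof (intro ballI impI)
      fix D x y assume "D \<in> family v n m" and x: "x \<in> D" and y: "y \<in> D" and ne: "x \<noteq> y"
      then obtain a where a: "a \<in> A" and D: "D = (\<lambda>\<alpha>. V \<alpha> a mod v) ` E" using fam blk by auto
      obtain \<alpha> where al: "\<alpha> \<in> E" and xe: "x = V \<alpha> a mod v" using x D by auto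
      obtain \<beta> where be: "\<beta> \<in> E" and ye: "y = V \<beta> a mod v" using y D by auto
      show "half_sum v x y \<notin> \<Union> (family v n m)"
      proof
        assume "half_sum v x y \<in> \<Union> (family v n m)"
        then obtain b \<gamma> where b: "b \<in> A" and ga: "\<gamma> \<in> E" and hs: "half_sum v x y = V \<gamma> b mod v"
          using fam blk by auto
        have "\<forall>i\<in>{1..n}. \<alpha> i = \<beta> i"
          using hs_lemma[OF m1 _ _ _ _ _ v assms(3), of \<alpha> \<beta> \<gamma> a b] al be ga a b hs xe ye
          unfolding E_def A_def V_def by blast
        then have "\<alpha> = \<beta>" using al be ext_eq unfolding E_def by metis
        then show False using ne xe ye by simp
      qed
    qed
  qed
qed

end
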